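(* Let $k\ge1$ be an integer, let $\mathbf G$ be an abelian group, let $A_1,\dots,A_k,B\subseteq\mathbf G$ be finite, let $W,Y\subseteq\mathbf G^k$ be finite and $X,Z\subseteq\mathbf G$ be finite. Then (i) $|W\times X|\cdot|Y-\Delta(Z)|\le|Y\times W\times Z-\Delta(X)|$ (here $Y\times W\times Z\subseteq\mathbf G^{2k+1}$); (ii) for every $m\in\{1,\dots,k-1\}$, $$|A_1\times\dots\times A_k-\Delta(B)|\le|A_1\times\dots\times A_m-\Delta(A_{m+1})|\cdot|A_{m+1}\times\dots\times A_k-\Delta(B)|;$$ (iii) $|Y\times Z-\Delta(X)|=|Y\times X-\Delta(Z)|$ (here $Y\times Z, Y\times X\subseteq\mathbf G^{k+1}$).
   Context: For $S\subseteq\mathbf G$ and an integer $d\ge1$, $\Delta(S)=\Delta_d(S)=\{(s,s,\dots,s)\in\mathbf G^d: s\in S\}$, the dimension $d$ being that of the set it is subtracted from. For $U,V\subseteq\mathbf G^d$, $U-V=\{u-v:u\in U,v\in V\}$ (coordinatewise). *)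

theory Defs
  imports Main
begin

text \<open>Elements of G^d are represented as lists of length d over the abelian group 'a.\<close>

definition diag_diff :: "'a::ab_group_add list set \<Rightarrow> 'a set \<Rightarrow> 'a list set" (infixl "-\<^sub>\<Delta>" 65) where
  "U -\<^sub>\<Delta> S = {map (\<lambda>u. u - s) y | y s. y \<in> U \<and> s \<in> S}"

text \<open>Cartesian product of tuple sets, realised by concatenation (G^a x G^b = G^(a+b)).\<close>
definition tprod :: "'a list set \<Rightarrow> 'a list set \<Rightarrow> 'a list set" (infixr "\<otimes>" 70) where
  "U \<otimes> V = {u @ v | u v. u \<in> U \<and> v \<in> V}"

definition tup1 :: "'a set \<Rightarrow> 'a list set" where
  "tup1 X = (\<lambda>x. [x]) ` X"

end

theory Submission
  imports Defs
begin

lemma listset_iff: "l \<in> listset As \<longleftrightarrow> list_all2 (\<lambda>x A. x \<in> A) l As"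
proof (induction As arbitrary: l)
  case Nil then show ?case by auto
next
  case (Cons A As) then show ?case
    by (cases l) (auto simp: set_Cons_def)
qed

lemma finite_listset: "\<forall>A\<in>set As. finite A \<Longrightarrow> finite (listset As)"
proof (induction As)
  case Nil then show ?case by auto
next
  case (Cons A As)
  have "set_Cons A (listset As) = (\<lambda>(x,xs). x # xs) ` (A \<times> listset As)"
    by (auto simp: set_Cons_def)
  then show ?case using Cons by auto
qed

lemma finite_dd: "finite U \<Longrightarrow> finite S \<Longrightarrow> finite (U -\<^sub>\<Delta> S)"
proof -
  assume "finite U" "finite S"
  have "U -\<^sub>\<Delta> S = (\<lambda>(y,s). map (\<lambda>u. u - s) y) ` (U \<times> S)"
    by (auto simp: diag_diff_def)
  then show ?thesis using \<open>finite U\<close> \<open>finite S\<close> by auto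
qed

lemma finite_tprod: "finite U \<Longrightarrow> finite V \<Longrightarrow> finite (U \<otimes> V)"
proof -
  assume "finite U" "finite V"
  have "U \<otimes> V = (\<lambda>(u,v). u @ v) ` (U \<times> V)"
    by (auto simp: tprod_def)
  then show ?thesis using \<open>finite U\<close> \<open>finite V\<close> by auto
qed

lemma part3:
  fixes X Z :: "'a::ab_group_add set" and Y :: "'a list set"
  shows "card ((Y \<otimes> tup1 Z) -\<^sub>\<Delta> X) = card ((Y \<otimes> tup1 X) -\<^sub>\<Delta> Z)"
proof -
  define phi :: "'a list \<Rightarrow> 'a list" where
    "phi l = map (\<lambda>u. u - last l) (butlast l) @ [- last l]" for l
  have inv: "phi (phi l) = l" if "l \<noteq> []" for l
    using that by (simp add: phi_def comp_def append_butlast_last_id)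
  have img: "phi ` ((Y \<otimes> tup1 Z) -\<^sub>\<Delta> X) \<subseteq> (Y \<otimes> tup1 X) -\<^sub>\<Delta> Z" for X Z :: "'a set"
  proof
    fix l assume "l \<in> phi ` ((Y \<otimes> tup1 Z) -\<^sub>\<Delta> X)"
    then obtain y z x where yzx: "y \<in> Y" "z \<in> Z" "x \<in> X"
      and l: "l = phi (map (\<lambda>u. u - x) (y @ [z]))"
      by (auto simp: diag_diff_def tprod_def tup1_def)
    have "l = map (\<lambda>u. u - z) (y @ [x])"
      by (simp add: l phi_def comp_def butlast_append algebra_simps)
    moreover have "y @ [x] \<in> Y \<otimes> tup1 X" using yzx by (auto simp: tprod_def tup1_def)
    ultimately show "l \<in> (Y \<otimes> tup1 X) -\<^sub>\<Delta> Z" using yzx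
      unfolding diag_diff_def by blast
  qed
  have ne: "l \<noteq> []" if "l \<in> (Y \<otimes> tup1 X) -\<^sub>\<Delta> Z" for l X Z
    using that by (auto simp: diag_diff_def tprod_def tup1_def)
  have "bij_betw phi ((Y \<otimes> tup1 Z) -\<^sub>\<Delta> X) ((Y \<otimes> tup1 X) -\<^sub>\<Delta> Z)"
  proof (rule bij_betw_byWitness[where f'=phi])
    show "\<forall>a\<in>(Y \<otimes> tup1 Z) -\<^sub>\<Delta> X. phi (phi a) = a" using inv ne by blast
    show "\<forall>a\<in>(Y \<otimes> tup1 X) -\<^sub>\<Delta> Z. phi (phi a) = a" using inv ne by blast
  qed (use img in auto)
  then show ?thesis by (rule bij_betw_same_card)
qed


lemma part1:
  fixes X Z :: "'a::ab_group_add set" and W Y :: "'a list set"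
  assumes "finite W" "\<forall>w\<in>W. length w = k" "finite Y" "\<forall>y\<in>Y. length y = k"
    "finite X" "finite Z"
  shows "card (W \<times> X) * card (Y -\<^sub>\<Delta> Z) \<le> card ((Y \<otimes> W \<otimes> tup1 Z) -\<^sub>\<Delta> X)"
proof -
  define rep where "rep d = (SOME p. fst p \<in> Y \<and> snd p \<in> Z \<and> d = map (\<lambda>u. u - snd p) (fst p))" for d
  have rep: "fst (rep d) \<in> Y \<and> snd (rep d) \<in> Z \<and> d = map (\<lambda>u. u - snd (rep d)) (fst (rep d))"
    if "d \<in> Y -\<^sub>\<Delta> Z" for d
  proof -
    from that obtain y z where "y \<in> Y" "z \<in> Z" "d = map (\<lambda>u. u - z) y"
      by (auto simp: diag_diff_def)
    then have "\<exists>p. fst p \<in> Y \<and> snd p \<in> Z \<and> d = map (\<lambda>u. u - snd p) (fst p)"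
      by (intro exI[of _ "(y,z)"]) auto
    then show ?thesis unfolding rep_def by (rule someI_ex)
  qed
  define F where "F q = (case q of ((w,x),d) \<Rightarrow>
      map (\<lambda>u. u - x) (fst (rep d) @ w @ [snd (rep d)]))" for q
  have "inj_on F ((W \<times> X) \<times> (Y -\<^sub>\<Delta> Z))"
  proof (rule inj_onI)
    fix p q assume p: "p \<in> (W \<times> X) \<times> (Y -\<^sub>\<Delta> Z)" and q: "q \<in> (W \<times> X) \<times> (Y -\<^sub>\<Delta> Z)"
      and eq: "F p = F q"
    obtain w x d where pp: "p = ((w,x),d)" by (metis prod.collapse)
    obtain w' x' d' where qq: "q = ((w',x'),d')" by (metis prod.collapse)
    obtain y z where yz: "rep d = (y,z)" by (metis prod.collapse)
    obtain y' z' where yz': "rep d' = (y',z')" by (metis prod.collapse)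
    have r: "y \<in> Y" "z \<in> Z" "d = map (\<lambda>u. u - z) y" using rep[of d] p pp yz by auto
    have r': "y' \<in> Y" "z' \<in> Z" "d' = map (\<lambda>u. u - z') y'" using rep[of d'] q qq yz' by auto
    have len: "length y = length y'" "length w = length w'"
      using assms r r' p q pp qq by auto
    have e: "map (\<lambda>u. u - x) y @ map (\<lambda>u. u - x) w @ [z - x]
        = map (\<lambda>u. u - x') y' @ map (\<lambda>u. u - x') w' @ [z' - x']"
      using eq by (simp add: F_def pp qq yz yz')
    then have e1: "map (\<lambda>u. u - x) y = map (\<lambda>u. u - x') y'"
      and e2: "map (\<lambda>u. u - x) w = map (\<lambda>u. u - x') w'" and e3: "z - x = z' - x'"
      using len by auto
    have "d = map (\<lambda>v. v - (z - x)) (map (\<lambda>u. u - x) y)"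
      by (simp add: r comp_def)
    also have "\<dots> = map (\<lambda>v. v - (z' - x')) (map (\<lambda>u. u - x') y')"
      using e1 e3 by simp
    also have "\<dots> = d'" by (simp add: r' comp_def)
    finally have dd: "d = d'" .
    then have "y = y'" "z = z'" using yz yz' by auto
    then have xx: "x = x'" using e3 by (metis diff_left_imp_eq minus_diff_eq)
    have "w = w'"
    proof -
      have "map (\<lambda>u. u + x) (map (\<lambda>u. u - x) w) = map (\<lambda>u. u + x) (map (\<lambda>u. u - x) w')"
        using e2 xx by simp
      then show ?thesis by (simp add: comp_def)
    qed
    then show "p = q" using pp qq dd xx by simp
  qed
  moreover have "F ` ((W \<times> X) \<times> (Y -\<^sub>\<Delta> Z)) \<subseteq> (Y \<otimes> W \<otimes> tup1 Z) -\<^sub>\<Delta> X"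
  proof
    fix l assume "l \<in> F ` ((W \<times> X) \<times> (Y -\<^sub>\<Delta> Z))"
    then obtain w x d where wxd: "w \<in> W" "x \<in> X" "d \<in> Y -\<^sub>\<Delta> Z" and l: "l = F ((w,x),d)"
      by auto
    obtain y z where yz: "rep d = (y,z)" by (metis prod.collapse)
    have r: "y \<in> Y" "z \<in> Z" using rep[of d] wxd yz by auto
    have "[z] \<in> tup1 Z" using r by (simp add: tup1_def)
    then have "w @ [z] \<in> W \<otimes> tup1 Z" using wxd unfolding tprod_def by blast
    then have "y @ w @ [z] \<in> Y \<otimes> W \<otimes> tup1 Z" using r unfolding tprod_def by blast
    moreover have "l = map (\<lambda>u. u - x) (y @ w @ [z])" by (simp add: l F_def yz)
    ultimately show "l \<in> (Y \<otimes> W \<otimes> tup1 Z) -\<^sub>\<Delta> X" using wxd unfolding diag_diff_def by blast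
  qed
  moreover have "finite ((Y \<otimes> W \<otimes> tup1 Z) -\<^sub>\<Delta> X)"
    using assms by (intro finite_dd finite_tprod) (auto simp: tup1_def)
  ultimately have "card ((W \<times> X) \<times> (Y -\<^sub>\<Delta> Z)) \<le> card ((Y \<otimes> W \<otimes> tup1 Z) -\<^sub>\<Delta> X)"
    by (rule card_inj_on_le)
  then show ?thesis by (simp add: card_cartesian_product)
qed

lemma part2:
  fixes As :: "'a::ab_group_add set list" and B :: "'a set"
  assumes "\<forall>A\<in>set As. finite A" "finite B" "m < length As"
  shows "card (listset As -\<^sub>\<Delta> B)
     \<le> card (listset (take m As) -\<^sub>\<Delta> (As ! m)) * card (listset (drop m As) -\<^sub>\<Delta> B)"
proof -
  define G where "G l = (map (\<lambda>u. u - l ! m) (take m l), drop m l)" for l :: "'a list"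
  have len: "length l = length As" if "l \<in> listset As -\<^sub>\<Delta> B" for l
    using that by (auto simp: diag_diff_def listset_iff list_all2_lengthD)
  have "inj_on G (listset As -\<^sub>\<Delta> B)"
  proof (rule inj_onI)
    fix l l' assume l: "l \<in> listset As -\<^sub>\<Delta> B" and l': "l' \<in> listset As -\<^sub>\<Delta> B" and eq: "G l = G l'"
    have d: "drop m l = drop m l'" using eq by (simp add: G_def)
    have "l ! m = l' ! m"
    proof -
      have "l ! m = drop m l ! 0" using len[OF l] assms by simp
      also have "\<dots> = drop m l' ! 0" using d by simp
      also have "\<dots> = l' ! m" using len[OF l'] assms by simp
      finally show ?thesis .
    qed
    moreover have "map (\<lambda>u. u - l ! m) (take m l) = map (\<lambda>u. u - l' ! m) (take m l')"
      using eq by (simp add: G_def)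
    ultimately have "map (\<lambda>u. u + l!m) (map (\<lambda>u. u - l ! m) (take m l))
       = map (\<lambda>u. u + l!m) (map (\<lambda>u. u - l ! m) (take m l'))" by simp
    then have "take m l = take m l'" by (simp add: comp_def)
    then show "l = l'" using d by (metis append_take_drop_id)
  qed
  moreover have "G ` (listset As -\<^sub>\<Delta> B) \<subseteq>
      (listset (take m As) -\<^sub>\<Delta> (As ! m)) \<times> (listset (drop m As) -\<^sub>\<Delta> B)"
  proof
    fix p assume "p \<in> G ` (listset As -\<^sub>\<Delta> B)"
    then obtain a b where a: "a \<in> listset As" and b: "b \<in> B" and p: "p = G (map (\<lambda>u. u - b) a)"
      by (auto simp: diag_diff_def)
    have la: "list_all2 (\<lambda>x A. x \<in> A) a As" using a listset_iff by blast
    have lena: "length a = length As" using la list_all2_lengthD by blast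
    have am: "a ! m \<in> As ! m" using list_all2_nthD[OF la, of m] assms lena by simp
    have t: "take m a \<in> listset (take m As)" unfolding listset_iff by (rule list_all2_takeI[OF la])
    have dr: "drop m a \<in> listset (drop m As)" unfolding listset_iff by (rule list_all2_dropI[OF la])
    have p1: "fst p = map (\<lambda>u. u - a ! m) (take m a)"
      using lena assms by (simp add: p G_def take_map comp_def)
    have p2: "snd p = map (\<lambda>u. u - b) (drop m a)"
      by (simp add: p G_def drop_map)
    have "fst p \<in> listset (take m As) -\<^sub>\<Delta> (As ! m)" using p1 t am unfolding diag_diff_def by blast
    moreover have "snd p \<in> listset (drop m As) -\<^sub>\<Delta> B" using p2 dr b unfolding diag_diff_def by blast
    ultimately show "p \<in> (listset (take m As) -\<^sub>\<Delta> (As ! m)) \<times> (listset (drop m As) -\<^sub>\<Delta> B)"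
      by (simp add: mem_Times_iff)
  qed
  moreover have "finite ((listset (take m As) -\<^sub>\<Delta> (As ! m)) \<times> (listset (drop m As) -\<^sub>\<Delta> B))"
    using assms by (intro finite_cartesian_product finite_dd finite_listset)
      (auto dest: in_set_takeD in_set_dropD)
  ultimately have "card (listset As -\<^sub>\<Delta> B)
      \<le> card ((listset (take m As) -\<^sub>\<Delta> (As ! m)) \<times> (listset (drop m As) -\<^sub>\<Delta> B))"
    by (rule card_inj_on_le)
  then show ?thesis by (simp add: card_cartesian_product)
qed

theorem theorem7:
  fixes k :: nat
    and As :: "'a::ab_group_add set list"
    and B X Z :: "'a set"
    and W Y :: "'a list set"
  assumes "k \<ge> 1"
    and "length As = k" and "\<forall>A\<in>set As. finite A" and "finite B"
    and "finite W" and "\<forall>w\<in>W. length w = k"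
    and "finite Y" and "\<forall>y\<in>Y. length y = k"
    and "finite X" and "finite Z"
  shows "(card (W \<times> X) * card (Y -\<^sub>\<Delta> Z) \<le> card ((Y \<otimes> W \<otimes> tup1 Z) -\<^sub>\<Delta> X))
    \<and> (\<forall>m. 1 \<le> m \<and> m \<le> k - 1 \<longrightarrow>
           card (listset As -\<^sub>\<Delta> B)
             \<le> card (listset (take m As) -\<^sub>\<Delta> (As ! m)) * card (listset (drop m As) -\<^sub>\<Delta> B))
    \<and> card ((Y \<otimes> tup1 Z) -\<^sub>\<Delta> X) = card ((Y \<otimes> tup1 X) -\<^sub>\<Delta> Z)"
proof (intro conjI allI impI)
  show "card (W \<times> X) * card (Y -\<^sub>\<Delta> Z) \<le> card ((Y \<otimes> W \<otimes> tup1 Z) -\<^sub>\<Delta> X)"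
    using assms by (intro part1[where k=k]) auto
  show "card ((Y \<otimes> tup1 Z) -\<^sub>\<Delta> X) = card ((Y \<otimes> tup1 X) -\<^sub>\<Delta> Z)" by (rule part3)
  fix m assume "1 \<le> m \<and> m \<le> k - 1"
  then have "m < length As" using assms by auto
  then show "card (listset As -\<^sub>\<Delta> B)
             \<le> card (listset (take m As) -\<^sub>\<Delta> (As ! m)) * card (listset (drop m As) -\<^sub>\<Delta> B)"
    using assms by (intro part2) auto
qed

end
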